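(* Let $d>0$, $\mu>0$, let $J$ satisfy (J) but $\int_{-\infty}^0\int_0^{+\infty}J(x-y)\,dy\,dx=+\infty$, and let $f$ satisfy (f3). Let $\{J_n\}$ be a sequence of nonnegative, continuous, even functions with nonempty compact support such that $J_n\le J_{n+1}\le J$ for all $n\ge1$ and $J_n\to J$ in $L^1(\mathbb{R})$, and let $\sigma_n,\eta_n$ be as in the context. Suppose that for each sufficiently large $n$, $c_n>0$ is the unique value for which the problem $$d\int_{-\infty}^0J_n(x-y)\phi(y)\,dy-d\phi(x)+c_n\phi'(x)+f(\phi(x))=0\ (x<0),\quad \phi(-\infty)=\eta_n,\ \phi(0)=0,\quad c_n=\mu\int_{-\infty}^0\int_0^{+\infty}J_n(x-y)\phi(x)\,dy\,dx$$ has a solution $\phi=\phi_n\in C^1((-\infty,0])$ strictly decreasing in $x$. Then $\lim_{n\to\infty}c_n=\infty$.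
   Context: Condition (J): $J\in C(\mathbb{R})\cap L^\infty(\mathbb{R})$, $J\ge 0$, $J(0)>0$, $\int_{\mathbb{R}}J=1$, $J$ even. Condition (f3): $f\in C^1([0,\infty))$, $f(0)=f(1)=0$, $f>0$ in $(0,1)$, $f'(0)>0>f'(1)$, $f(u)/u$ nonincreasing in $u>0$. $\sigma_n:=\int_{\mathbb{R}}J_n\in(0,1]$, $\sigma_n\to1$; for large $n$, $\eta_n\in(0,1)$ denotes the unique positive zero of $u\mapsto f(u)-(1-\sigma_n)u$. Standing assumption in the paper's setting: for some initial datum $u_0$ (with $u_0\in C([-h_0,h_0])$, $u_0(\pm h_0)=0$, $u_0>0$ inside) the solution $(u,g,h)$ of the nonlocal free boundary problem $u_t=d\int_{g}^{h}J(x-y)u(t,y)dy-du+f(u)$, $u(t,g)=u(t,h)=0$, $h'=\mu\int_g^h\int_h^\infty J(x-y)u\,dydx$, $g'=-\mu\int_g^h\int_{-\infty}^gJ(x-y)u\,dydx$, $u(0)=u_0$, $h(0)=-g(0)=h_0$, spreads ($h\to\infty$, $g\to-\infty$, $u\to1$ locally uniformly). *)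

theory Defs
  imports "HOL-Analysis.Analysis"
begin

definition kernel_J :: "(real \<Rightarrow> real) \<Rightarrow> bool" where
  "kernel_J J \<longleftrightarrow> continuous_on UNIV J \<and> (\<exists>B. \<forall>x. \<bar>J x\<bar> \<le> B)
     \<and> (\<forall>x. J x \<ge> 0) \<and> J 0 > 0 \<and> integrable lborel J \<and> integral\<^sup>L lborel J = 1
     \<and> (\<forall>x. J (-x) = J x)"

definition cond_f3 :: "(real \<Rightarrow> real) \<Rightarrow> bool" where
  "cond_f3 f \<longleftrightarrow>
     (\<exists>f'. (\<forall>u\<ge>0. (f has_real_derivative f' u) (at u within {0..}))
          \<and> continuous_on {0..} f' \<and> f' 0 > 0 \<and> f' 1 < 0)
     \<and> f 0 = 0 \<and> f 1 = 0 \<and> (\<forall>u. 0 < u \<and> u < 1 \<longrightarrow> f u > 0)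
     \<and> (\<forall>u v. 0 < u \<and> u \<le> v \<longrightarrow> f v / v \<le> f u / u)"

definition eta :: "(real \<Rightarrow> real) \<Rightarrow> real \<Rightarrow> real" where
  "eta f \<sigma> = (THE u. 0 < u \<and> f u - (1 - \<sigma>) * u = 0)"

definition semiwave ::
  "real \<Rightarrow> real \<Rightarrow> (real \<Rightarrow> real) \<Rightarrow> (real \<Rightarrow> real) \<Rightarrow> real \<Rightarrow> real \<Rightarrow> (real \<Rightarrow> real) \<Rightarrow> bool" where
  "semiwave d \<mu> K f \<eta> c \<phi> \<longleftrightarrow>
     (\<exists>\<phi>'. (\<forall>x\<le>0. (\<phi> has_real_derivative \<phi>' x) (at x within {..0}))
         \<and> continuous_on {..0} \<phi>'
         \<and> (\<forall>x<0. d * (LINT y:{..0}|lborel. K (x - y) * \<phi> y) - d * \<phi> x + c * \<phi>' x + f (\<phi> x) = 0))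
     \<and> (\<forall>x y. x < y \<and> y \<le> 0 \<longrightarrow> \<phi> y < \<phi> x)
     \<and> (\<phi> \<longlongrightarrow> \<eta>) at_bot \<and> \<phi> 0 = 0
     \<and> (\<integral>\<^sup>+ x. \<integral>\<^sup>+ y. ennreal (indicator {..0} x * indicator {0..} y * K (x - y) * \<phi> x) \<partial>lborel \<partial>lborel)
        = ennreal (c / \<mu>)"

end

theory Submission
  imports Defs
begin


lemma meas_ind_cont:
  fixes h :: "real \<Rightarrow> real"
  assumes "continuous_on {p..q} h"
  shows "(\<lambda>z. indicator {p..q} z * h z) \<in> borel_measurable borel"
  using borel_measurable_continuous_on_indicator[of "{p..q}" h] assms by simp

lemma int_ind_cont:
  fixes h :: "real \<Rightarrow> real"
  assumes "continuous_on {p..q} h"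
  shows "integrable lborel (\<lambda>z. indicator {p..q} z * h z)"
  using borel_integrable_compact[of "{p..q}" h] assms by simp

lemma ode_int:
  fixes d c x :: real and \<phi> \<phi>' f :: "real \<Rightarrow> real" and NK :: "real \<Rightarrow> ennreal"
  assumes x: "x < 0" and d: "d > 0" and c: "c \<ge> 0"
    and deriv: "\<And>z. z \<in> {x..0} \<Longrightarrow> (\<phi> has_real_derivative \<phi>' z) (at z within {x..0})"
    and c1: "continuous_on {x..0} \<phi>" and c2: "continuous_on {x..0} \<phi>'"
    and c3: "continuous_on {x..0} (\<lambda>z. f (\<phi> z))"
    and NKm[measurable]: "NK \<in> borel_measurable borel"
    and pw: "\<And>z. x \<le> z \<Longrightarrow> z < 0 \<Longrightarrow> ennreal d * NK z + ennreal (f (\<phi> z)) = ennreal (d * \<phi> z - c * \<phi>' z)"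
    and pwnn: "\<And>z. x \<le> z \<Longrightarrow> z < 0 \<Longrightarrow> d * \<phi> z - c * \<phi>' z \<ge> 0"
    and fnn: "\<And>z. z \<in> {x..0} \<Longrightarrow> f (\<phi> z) \<ge> 0"
    and pnn: "\<And>z. z \<in> {x..0} \<Longrightarrow> \<phi> z \<ge> 0"
    and mono: "\<phi> 0 \<le> \<phi> x"
  shows "ennreal d * (\<integral>\<^sup>+z. indicator {x..0} z * NK z \<partial>lborel)
          + (\<integral>\<^sup>+z. ennreal (indicator {x..0} z * f (\<phi> z)) \<partial>lborel)
       = ennreal d * (\<integral>\<^sup>+z. ennreal (indicator {x..0} z * \<phi> z) \<partial>lborel) + ennreal (c * (\<phi> x - \<phi> 0))"
proof -
  have [measurable]: "(\<lambda>z. indicator {x..0} z * f (\<phi> z)) \<in> borel_measurable borel"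
    by (rule meas_ind_cont[OF c3])
  have i1: "integrable lborel (\<lambda>z. indicator {x..0} z * \<phi> z)" by (rule int_ind_cont[OF c1])
  have i2: "integrable lborel (\<lambda>z. indicator {x..0} z * \<phi>' z)" by (rule int_ind_cont[OF c2])
  have ftc: "integral\<^sup>L lborel (\<lambda>z. indicator {x..0} z * \<phi>' z) = \<phi> 0 - \<phi> x"
  proof -
    have "interval_lebesgue_integral lborel (ereal x) (ereal 0) \<phi>' = \<phi> 0 - \<phi> x"
      using x by (intro interval_integral_FTC_finite)
        (auto simp: min_def max_def c2 has_real_derivative_iff_has_vector_derivative[symmetric] intro!: deriv)
    then show ?thesis using x interval_integral_Icc[of x 0 \<phi>'] by (simp add: set_lebesgue_integral_def)
  qed
  have e1: "(\<integral>\<^sup>+z. ennreal (indicator {x..0} z * \<phi> z) \<partial>lborel) = ennreal (integral\<^sup>L lborel (\<lambda>z. indicator {x..0} z * \<phi> z))"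
    by (rule nn_integral_eq_integral[OF i1]) (auto simp: indicator_def pnn)
  have H: "integrable lborel (\<lambda>z. indicator {x..0} z * (d * \<phi> z - c * \<phi>' z))"
    by (rule int_ind_cont) (intro continuous_intros c1 c2)
  have Hint: "integral\<^sup>L lborel (\<lambda>z. indicator {x..0} z * (d * \<phi> z - c * \<phi>' z))
      = d * integral\<^sup>L lborel (\<lambda>z. indicator {x..0} z * \<phi> z) - c * integral\<^sup>L lborel (\<lambda>z. indicator {x..0} z * \<phi>' z)"
  proof -
    have "(\<lambda>z. indicator {x..0} z * (d * \<phi> z - c * \<phi>' z)) = (\<lambda>z. d * (indicator {x..0} z * \<phi> z) - c * (indicator {x..0} z * \<phi>' z))"
      by (auto simp: algebra_simps)
    then show ?thesis using i1 i2 by simp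
  qed
  have "ennreal d * (\<integral>\<^sup>+z. indicator {x..0} z * NK z \<partial>lborel)
          + (\<integral>\<^sup>+z. ennreal (indicator {x..0} z * f (\<phi> z)) \<partial>lborel)
      = (\<integral>\<^sup>+z. ennreal d * (indicator {x..0} z * NK z) \<partial>lborel)
          + (\<integral>\<^sup>+z. ennreal (indicator {x..0} z * f (\<phi> z)) \<partial>lborel)"
    by (subst nn_integral_cmult) auto
  also have "\<dots> = (\<integral>\<^sup>+z. ennreal d * (indicator {x..0} z * NK z) + ennreal (indicator {x..0} z * f (\<phi> z)) \<partial>lborel)"
    by (rule nn_integral_add[symmetric]) auto
  also have "\<dots> = (\<integral>\<^sup>+z. ennreal (indicator {x..0} z * (d * \<phi> z - c * \<phi>' z)) \<partial>lborel)"
  proof (rule nn_integral_cong_AE)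
    show "AE z in lborel. ennreal d * (indicator {x..0} z * NK z) + ennreal (indicator {x..0} z * f (\<phi> z))
        = ennreal (indicator {x..0} z * (d * \<phi> z - c * \<phi>' z))"
      using AE_lborel_singleton[of 0]
    proof eventually_elim
      case (elim z)
      show ?case
      proof (cases "z \<in> {x..0}")
        case True
        then have "x \<le> z" "z < 0" using elim by auto
        then show ?thesis using True pw[of z] by (simp add: algebra_simps)
      next
        case False then show ?thesis by simp
      qed
    qed
  qed
  also have "\<dots> = ennreal (integral\<^sup>L lborel (\<lambda>z. indicator {x..0} z * (d * \<phi> z - c * \<phi>' z)))"
  proof (rule nn_integral_eq_integral[OF H])
    show "AE z in lborel. 0 \<le> indicator {x..0} z * (d * \<phi> z - c * \<phi>' z)"
      using AE_lborel_singleton[of 0]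
      by eventually_elim (use pwnn in \<open>fastforce simp: indicator_def\<close>)
  qed
  also have "\<dots> = ennreal (d * integral\<^sup>L lborel (\<lambda>z. indicator {x..0} z * \<phi> z) + c * (\<phi> x - \<phi> 0))"
    by (simp only: Hint ftc) (simp add: algebra_simps)
  also have "\<dots> = ennreal d * (\<integral>\<^sup>+z. ennreal (indicator {x..0} z * \<phi> z) \<partial>lborel) + ennreal (c * (\<phi> x - \<phi> 0))"
  proof -
    have nn: "0 \<le> integral\<^sup>L lborel (\<lambda>z. indicator {x..0} z * \<phi> z)"
      by (rule Bochner_Integration.integral_nonneg) (auto simp: indicator_def pnn)
    have "ennreal (d * integral\<^sup>L lborel (\<lambda>z. indicator {x..0} z * \<phi> z) + c * (\<phi> x - \<phi> 0))
       = ennreal (d * integral\<^sup>L lborel (\<lambda>z. indicator {x..0} z * \<phi> z)) + ennreal (c * (\<phi> x - \<phi> 0))"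
      using nn d c mono by (intro ennreal_plus) auto
    then show ?thesis using nn d by (simp add: e1 ennreal_mult)
  qed
  finally show ?thesis .
qed



lemma transl_K:
  fixes K :: "real \<Rightarrow> real"
  assumes [measurable]: "K \<in> borel_measurable borel"
  shows "(\<integral>\<^sup>+z. ennreal (K (z - y)) \<partial>lborel) = (\<integral>\<^sup>+z. ennreal (K z) \<partial>lborel)"
  by (subst nn_integral_real_affine[where c=1 and t=y]) auto

lemma core:
  fixes d \<mu> c \<sigma> b x \<eta> :: real and K f \<phi> \<phi>' :: "real \<Rightarrow> real"
  assumes d: "d > 0" and mu: "\<mu> > 0" and c: "c \<ge> 0"
    and Km[measurable]: "K \<in> borel_measurable borel" and Knn: "\<And>t. K t \<ge> 0"
    and Keven: "\<And>t. K (- t) = K t" and Kint: "integrable lborel K"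
    and sig: "ennreal \<sigma> = (\<integral>\<^sup>+t. ennreal (K t) \<partial>lborel)" and sig0: "0 \<le> \<sigma>" and sig1: "\<sigma> \<le> 1"
    and pc: "continuous_on {..0} \<phi>" and pc': "continuous_on {..0} \<phi>'"
    and deriv: "\<And>z. z \<le> 0 \<Longrightarrow> (\<phi> has_real_derivative \<phi>' z) (at z within {..0})"
    and pnn: "\<And>y. y \<le> 0 \<Longrightarrow> 0 \<le> \<phi> y" and pbd: "\<And>y. y \<le> 0 \<Longrightarrow> \<phi> y \<le> \<eta>"
    and mono: "\<And>y z. y \<le> z \<Longrightarrow> z \<le> 0 \<Longrightarrow> \<phi> z \<le> \<phi> y"
    and ode: "\<And>z. z < 0 \<Longrightarrow> d * (LINT y:{..0}|lborel. K (z - y) * \<phi> y) - d * \<phi> z + c * \<phi>' z + f (\<phi> z) = 0"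
    and phi0: "\<phi> 0 = 0"
    and speed: "(\<integral>\<^sup>+x. \<integral>\<^sup>+y. ennreal (indicator {..0} x * indicator {0..} y * K (x - y) * \<phi> x) \<partial>lborel \<partial>lborel) = ennreal (c / \<mu>)"
    and fcont: "continuous_on {0..} f"
    and x: "x < 0" and b: "b = \<phi> x"
    and fg: "\<And>u. 0 \<le> u \<Longrightarrow> u \<le> b \<Longrightarrow> 0 \<le> f u \<and> d * (1 - \<sigma>) * u \<le> f u"
  shows "ennreal d * (\<integral>\<^sup>+y. ennreal (indicator {x..0} y * (b - \<phi> y)) * (\<integral>\<^sup>+z. ennreal (indicator {..<x} z * K (z - y)) \<partial>lborel) \<partial>lborel)
        + (\<integral>\<^sup>+y. ennreal (indicator {x..0} y * (f (\<phi> y) - d * (1 - \<sigma>) * \<phi> y)) \<partial>lborel)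
       \<le> ennreal (c * b) + ennreal d * ennreal (c / \<mu>)"
proof -
  have eta0: "0 \<le> \<eta>" using pnn[of 0] pbd[of 0] by simp
  have pcx: "continuous_on {x..0} \<phi>" by (rule continuous_on_subset[OF pc]) auto
  have pcx': "continuous_on {x..0} \<phi>'" by (rule continuous_on_subset[OF pc']) auto
  have fpc: "continuous_on {x..0} (\<lambda>z. f (\<phi> z))"
    by (rule continuous_on_compose2[OF fcont pcx]) (auto intro: pnn)
  have pleb: "\<phi> y \<le> b" if "x \<le> y" "y \<le> 0" for y using mono[OF that] b by simp
  define \<phi>0 where "\<phi>0 y = indicator {..0} y * \<phi> y" for y
  have [measurable]: "\<phi>0 \<in> borel_measurable borel"
    using borel_measurable_continuous_on_indicator[of "{..0}" \<phi>] pc by (simp add: \<phi>0_def[abs_def])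
  have [measurable]: "(\<lambda>y. indicator {x..0} y * \<phi> y) \<in> borel_measurable borel"
    by (rule meas_ind_cont[OF pcx])
  have [measurable]: "(\<lambda>y. indicator {x..0} y * (b - \<phi> y)) \<in> borel_measurable borel"
    by (rule meas_ind_cont) (intro continuous_intros pcx)
  have [measurable]: "(\<lambda>y. indicator {x..0} y * (f (\<phi> y) - d * (1 - \<sigma>) * \<phi> y)) \<in> borel_measurable borel"
    by (rule meas_ind_cont) (intro continuous_intros pcx fpc)
  have [measurable]: "(\<lambda>y. indicator {x..0} y * f (\<phi> y)) \<in> borel_measurable borel"
    by (rule meas_ind_cont[OF fpc])
  have p0nn: "0 \<le> \<phi>0 y" for y by (auto simp: \<phi>0_def indicator_def pnn)
  define NK where "NK z = (\<integral>\<^sup>+y. ennreal (\<phi>0 y * K (z - y)) \<partial>lborel)" for z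
  have [measurable]: "NK \<in> borel_measurable borel" unfolding NK_def[abs_def] by measurable
  have NKeq: "NK z = ennreal (LINT y:{..0}|lborel. K (z - y) * \<phi> y)"
    and NKnn: "0 \<le> (LINT y:{..0}|lborel. K (z - y) * \<phi> y)" for z
  proof -
    have i0: "integrable lborel (\<lambda>y. K (z - y))"
      using lborel_integrable_real_affine[OF Kint, of "-1" z] by simp
    have i1: "integrable lborel (\<lambda>y. \<phi>0 y * K (z - y))"
    proof (rule Bochner_Integration.integrable_bound[of _ "\<lambda>y. \<eta> * K (z - y)"])
      show "integrable lborel (\<lambda>y. \<eta> * K (z - y))" using i0 by simp
      show "(\<lambda>y. \<phi>0 y * K (z - y)) \<in> borel_measurable lborel" by measurable
      show "AE y in lborel. norm (\<phi>0 y * K (z - y)) \<le> norm (\<eta> * K (z - y))"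
        using Knn eta0 by (auto simp: \<phi>0_def indicator_def pnn pbd abs_mult intro!: mult_right_mono)
    qed
    have eqi: "(LINT y:{..0}|lborel. K (z - y) * \<phi> y) = integral\<^sup>L lborel (\<lambda>y. \<phi>0 y * K (z - y))"
      by (simp add: set_lebesgue_integral_def \<phi>0_def mult_ac)
    show "NK z = ennreal (LINT y:{..0}|lborel. K (z - y) * \<phi> y)"
      unfolding NK_def eqi by (rule nn_integral_eq_integral[OF i1]) (auto intro: mult_nonneg_nonneg p0nn Knn)
    show "0 \<le> (LINT y:{..0}|lborel. K (z - y) * \<phi> y)"
      unfolding eqi by (rule Bochner_Integration.integral_nonneg) (auto intro: mult_nonneg_nonneg p0nn Knn)
  qed
  have odeI: "ennreal d * (\<integral>\<^sup>+z. indicator {x..0} z * NK z \<partial>lborel)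
          + (\<integral>\<^sup>+z. ennreal (indicator {x..0} z * f (\<phi> z)) \<partial>lborel)
       = ennreal d * (\<integral>\<^sup>+z. ennreal (indicator {x..0} z * \<phi> z) \<partial>lborel) + ennreal (c * (\<phi> x - \<phi> 0))"
  proof (rule ode_int[OF x d c _ pcx pcx' fpc])
    show "(\<phi> has_real_derivative \<phi>' z) (at z within {x..0})" if "z \<in> {x..0}" for z
      using deriv[of z] that by (auto intro: DERIV_subset)
    show "NK \<in> borel_measurable borel" by measurable
    show "ennreal d * NK z + ennreal (f (\<phi> z)) = ennreal (d * \<phi> z - c * \<phi>' z)"
      and "d * \<phi> z - c * \<phi>' z \<ge> 0" if "x \<le> z" "z < 0" for z
    proof -
      have fz: "0 \<le> f (\<phi> z)" using fg[of "\<phi> z"] pnn[of z] pleb[of z] that by auto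
      have e: "d * (LINT y:{..0}|lborel. K (z - y) * \<phi> y) + f (\<phi> z) = d * \<phi> z - c * \<phi>' z"
        using ode[of z] that by simp
      show "d * \<phi> z - c * \<phi>' z \<ge> 0" using e[symmetric] fz NKnn[of z] d by simp
      show "ennreal d * NK z + ennreal (f (\<phi> z)) = ennreal (d * \<phi> z - c * \<phi>' z)"
      proof -
        have "ennreal (d * (LINT y:{..0}|lborel. K (z - y) * \<phi> y) + f (\<phi> z))
            = ennreal (d * (LINT y:{..0}|lborel. K (z - y) * \<phi> y)) + ennreal (f (\<phi> z))"
          using fz NKnn[of z] d by (intro ennreal_plus) auto
        then show ?thesis using NKnn[of z] d by (simp add: NKeq e[symmetric] ennreal_mult)
      qed
    qed
    show "f (\<phi> z) \<ge> 0" if "z \<in> {x..0}" for z using fg[of "\<phi> z"] pnn[of z] pleb[of z] that by auto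
    show "\<phi> z \<ge> 0" if "z \<in> {x..0}" for z using pnn that by auto
    show "\<phi> 0 \<le> \<phi> x" using mono[of x 0] x by simp
  qed

  define W where "W y = (\<integral>\<^sup>+z. ennreal (indicator {x..0} z * K (z - y)) \<partial>lborel)" for y
  define V where "V y = (\<integral>\<^sup>+z. ennreal (indicator {..<x} z * K (z - y)) \<partial>lborel)" for y
  define U where "U y = (\<integral>\<^sup>+z. ennreal (indicator {0<..} z * K (z - y)) \<partial>lborel)" for y
  define U' where "U' y = (\<integral>\<^sup>+z. ennreal (indicator {0..} z * K (y - z)) \<partial>lborel)" for y
  have [measurable]: "W \<in> borel_measurable borel" unfolding W_def[abs_def] by measurable
  have [measurable]: "V \<in> borel_measurable borel" unfolding V_def[abs_def] by measurable
  have [measurable]: "U \<in> borel_measurable borel" unfolding U_def[abs_def] by measurable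
  have [measurable]: "U' \<in> borel_measurable borel" unfolding U'_def[abs_def] by measurable
  define P where "P = (\<integral>\<^sup>+y. ennreal (indicator {x..0} y * \<phi> y) \<partial>lborel)"
  define PW where "PW = (\<integral>\<^sup>+y. ennreal (indicator {x..0} y * \<phi> y) * W y \<partial>lborel)"
  define PV where "PV = (\<integral>\<^sup>+y. ennreal (indicator {x..0} y * \<phi> y) * V y \<partial>lborel)"
  define PU where "PU = (\<integral>\<^sup>+y. ennreal (indicator {x..0} y * \<phi> y) * U y \<partial>lborel)"
  define VV where "VV = (\<integral>\<^sup>+y. ennreal (indicator {x..0} y) * V y \<partial>lborel)"
  define AV where "AV = (\<integral>\<^sup>+y. ennreal (indicator {x..0} y * (b - \<phi> y)) * V y \<partial>lborel)"
  define F where "F = (\<integral>\<^sup>+z. ennreal (indicator {x..0} z * f (\<phi> z)) \<partial>lborel)"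
  define G where "G = (\<integral>\<^sup>+y. ennreal (indicator {x..0} y * (f (\<phi> y) - d * (1 - \<sigma>) * \<phi> y)) \<partial>lborel)"
  define Q where "Q = (\<integral>\<^sup>+z. indicator {x..0} z * NK z \<partial>lborel)"
  have odeI': "ennreal d * Q + F = ennreal d * P + ennreal (c * b)"
    using odeI by (simp add: Q_def F_def P_def phi0 b)
  have Qswap: "Q = (\<integral>\<^sup>+y. ennreal (\<phi>0 y) * W y \<partial>lborel)"
  proof -
    have "Q = (\<integral>\<^sup>+z. \<integral>\<^sup>+y. ennreal (indicator {x..0} z * \<phi>0 y * K (z - y)) \<partial>lborel \<partial>lborel)"
      unfolding Q_def NK_def
    proof (rule nn_integral_cong)
      fix z
      have "indicator {x..0} z * (\<integral>\<^sup>+y. ennreal (\<phi>0 y * K (z - y)) \<partial>lborel)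
          = (\<integral>\<^sup>+y. indicator {x..0} z * ennreal (\<phi>0 y * K (z - y)) \<partial>lborel)"
        by (rule nn_integral_cmult[symmetric]) measurable
      also have "\<dots> = (\<integral>\<^sup>+y. ennreal (indicator {x..0} z * \<phi>0 y * K (z - y)) \<partial>lborel)"
        by (simp add: indicator_mult_ennreal mult.assoc)
      finally show "indicator {x..0} z * (\<integral>\<^sup>+y. ennreal (\<phi>0 y * K (z - y)) \<partial>lborel)
          = (\<integral>\<^sup>+y. ennreal (indicator {x..0} z * \<phi>0 y * K (z - y)) \<partial>lborel)" .
    qed
    also have "\<dots> = (\<integral>\<^sup>+y. \<integral>\<^sup>+z. ennreal (indicator {x..0} z * \<phi>0 y * K (z - y)) \<partial>lborel \<partial>lborel)"
      by (rule lborel_pair.Fubini') measurable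
    also have "\<dots> = (\<integral>\<^sup>+y. ennreal (\<phi>0 y) * W y \<partial>lborel)"
    proof (rule nn_integral_cong)
      fix y
      have "(\<integral>\<^sup>+z. ennreal (indicator {x..0} z * \<phi>0 y * K (z - y)) \<partial>lborel)
          = (\<integral>\<^sup>+z. ennreal (\<phi>0 y) * ennreal (indicator {x..0} z * K (z - y)) \<partial>lborel)"
        by (rule nn_integral_cong) (simp add: ennreal_mult' p0nn mult_ac)
      also have "\<dots> = ennreal (\<phi>0 y) * W y"
        unfolding W_def by (rule nn_integral_cmult) measurable
      finally show "(\<integral>\<^sup>+z. ennreal (indicator {x..0} z * \<phi>0 y * K (z - y)) \<partial>lborel) = ennreal (\<phi>0 y) * W y" .
    qed
    finally show ?thesis .
  qed
  have swap2: "(\<integral>\<^sup>+y. ennreal (indicator {..<x} y) * W y \<partial>lborel) = VV"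
  proof -
    have "(\<integral>\<^sup>+y. ennreal (indicator {..<x} y) * W y \<partial>lborel)
        = (\<integral>\<^sup>+y. \<integral>\<^sup>+z. ennreal (indicator {..<x} y * indicator {x..0} z * K (z - y)) \<partial>lborel \<partial>lborel)"
      unfolding W_def
    proof (rule nn_integral_cong)
      fix y
      have "ennreal (indicator {..<x} y) * (\<integral>\<^sup>+z. ennreal (indicator {x..0} z * K (z - y)) \<partial>lborel)
          = (\<integral>\<^sup>+z. ennreal (indicator {..<x} y) * ennreal (indicator {x..0} z * K (z - y)) \<partial>lborel)"
        by (rule nn_integral_cmult[symmetric]) measurable
      also have "\<dots> = (\<integral>\<^sup>+z. ennreal (indicator {..<x} y * indicator {x..0} z * K (z - y)) \<partial>lborel)"
        by (rule nn_integral_cong) (simp add: ennreal_mult' mult_ac)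
      finally show "ennreal (indicator {..<x} y) * (\<integral>\<^sup>+z. ennreal (indicator {x..0} z * K (z - y)) \<partial>lborel)
          = (\<integral>\<^sup>+z. ennreal (indicator {..<x} y * indicator {x..0} z * K (z - y)) \<partial>lborel)" .
    qed
    also have "\<dots> = (\<integral>\<^sup>+z. \<integral>\<^sup>+y. ennreal (indicator {..<x} y * indicator {x..0} z * K (z - y)) \<partial>lborel \<partial>lborel)"
      by (rule lborel_pair.Fubini'[symmetric]) measurable
    also have "\<dots> = VV"
      unfolding VV_def V_def
    proof (rule nn_integral_cong)
      fix z
      have "(\<integral>\<^sup>+y. ennreal (indicator {..<x} y * indicator {x..0} z * K (z - y)) \<partial>lborel)
          = (\<integral>\<^sup>+y. ennreal (indicator {x..0} z) * ennreal (indicator {..<x} y * K (y - z)) \<partial>lborel)"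
      proof (rule nn_integral_cong)
        fix y
        have "K (z - y) = K (y - z)" using Keven[of "y - z"] by simp
        then show "ennreal (indicator {..<x} y * indicator {x..0} z * K (z - y))
            = ennreal (indicator {x..0} z) * ennreal (indicator {..<x} y * K (y - z))"
          by (auto simp: indicator_def)
      qed
      also have "\<dots> = ennreal (indicator {x..0} z) * (\<integral>\<^sup>+y. ennreal (indicator {..<x} y * K (y - z)) \<partial>lborel)"
        by (rule nn_integral_cmult) measurable
      finally show "(\<integral>\<^sup>+y. ennreal (indicator {..<x} y * indicator {x..0} z * K (z - y)) \<partial>lborel)
          = ennreal (indicator {x..0} z) * (\<integral>\<^sup>+y. ennreal (indicator {..<x} y * K (y - z)) \<partial>lborel)" .
    qed
    finally show ?thesis .
  qed

  have Qlow: "ennreal b * VV + PW \<le> Q"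
  proof -
    have "ennreal b * VV + PW = (\<integral>\<^sup>+y. ennreal b * (ennreal (indicator {..<x} y) * W y) \<partial>lborel) + PW"
      by (subst nn_integral_cmult) (auto simp: swap2[symmetric])
    also have "\<dots> = (\<integral>\<^sup>+y. ennreal b * (ennreal (indicator {..<x} y) * W y) + ennreal (indicator {x..0} y * \<phi> y) * W y \<partial>lborel)"
      unfolding PW_def by (rule nn_integral_add[symmetric]) auto
    also have "\<dots> \<le> (\<integral>\<^sup>+y. ennreal (\<phi>0 y) * W y \<partial>lborel)"
    proof (rule nn_integral_mono)
      fix y
      show "ennreal b * (ennreal (indicator {..<x} y) * W y) + ennreal (indicator {x..0} y * \<phi> y) * W y \<le> ennreal (\<phi>0 y) * W y"
      proof (cases "y < x")
        case True
        then have "b \<le> \<phi> y" using mono[of y x] x b by simp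
        then have "ennreal b \<le> ennreal (\<phi>0 y)" using True x by (simp add: \<phi>0_def ennreal_leI)
        then show ?thesis using True by (simp add: mult_right_mono)
      next
        case False
        then show ?thesis by (auto simp: \<phi>0_def indicator_def)
      qed
    qed
    finally show ?thesis using Qswap by simp
  qed
  have part: "W y + V y + U y = ennreal \<sigma>" for y
  proof -
    have "W y + V y + U y = (\<integral>\<^sup>+z. ennreal (indicator {x..0} z * K (z - y)) + ennreal (indicator {..<x} z * K (z - y)) \<partial>lborel) + U y"
      unfolding W_def V_def by (subst nn_integral_add) auto
    also have "\<dots> = (\<integral>\<^sup>+z. ennreal (indicator {x..0} z * K (z - y)) + ennreal (indicator {..<x} z * K (z - y)) + ennreal (indicator {0<..} z * K (z - y)) \<partial>lborel)"
      unfolding U_def by (subst nn_integral_add) auto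
    also have "\<dots> = (\<integral>\<^sup>+z. ennreal (K (z - y)) \<partial>lborel)"
      using x by (intro nn_integral_cong) (auto simp: indicator_def)
    also have "\<dots> = ennreal \<sigma>" by (simp add: transl_K sig)
    finally show ?thesis .
  qed
  have part2: "PW + PV + PU = ennreal \<sigma> * P"
  proof -
    have "PW + PV + PU = (\<integral>\<^sup>+y. ennreal (indicator {x..0} y * \<phi> y) * W y + ennreal (indicator {x..0} y * \<phi> y) * V y \<partial>lborel) + PU"
      unfolding PW_def PV_def by (subst nn_integral_add) auto
    also have "\<dots> = (\<integral>\<^sup>+y. ennreal (indicator {x..0} y * \<phi> y) * W y + ennreal (indicator {x..0} y * \<phi> y) * V y + ennreal (indicator {x..0} y * \<phi> y) * U y \<partial>lborel)"
      unfolding PU_def by (subst nn_integral_add) auto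
    also have "\<dots> = (\<integral>\<^sup>+y. ennreal \<sigma> * ennreal (indicator {x..0} y * \<phi> y) \<partial>lborel)"
    proof (intro nn_integral_cong)
      fix y
      have "ennreal (indicator {x..0} y * \<phi> y) * W y + ennreal (indicator {x..0} y * \<phi> y) * V y + ennreal (indicator {x..0} y * \<phi> y) * U y
          = ennreal (indicator {x..0} y * \<phi> y) * (W y + V y + U y)" by (simp add: distrib_left)
      then show "ennreal (indicator {x..0} y * \<phi> y) * W y + ennreal (indicator {x..0} y * \<phi> y) * V y + ennreal (indicator {x..0} y * \<phi> y) * U y
          = ennreal \<sigma> * ennreal (indicator {x..0} y * \<phi> y)" by (simp add: part mult.commute)
    qed
    also have "\<dots> = ennreal \<sigma> * P" unfolding P_def by (rule nn_integral_cmult) auto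
    finally show ?thesis .
  qed
  have AVsplit: "ennreal b * VV = AV + PV"
  proof -
    have "ennreal b * VV = (\<integral>\<^sup>+y. ennreal b * (ennreal (indicator {x..0} y) * V y) \<partial>lborel)"
      unfolding VV_def by (rule nn_integral_cmult[symmetric]) auto
    also have "\<dots> = (\<integral>\<^sup>+y. ennreal (indicator {x..0} y * (b - \<phi> y)) * V y + ennreal (indicator {x..0} y * \<phi> y) * V y \<partial>lborel)"
    proof (rule nn_integral_cong)
      fix y
      show "ennreal b * (ennreal (indicator {x..0} y) * V y) = ennreal (indicator {x..0} y * (b - \<phi> y)) * V y + ennreal (indicator {x..0} y * \<phi> y) * V y"
      proof (cases "y \<in> {x..0}")
        case True
        then have "\<phi> y \<le> b" "0 \<le> \<phi> y" using pleb pnn by auto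
        then have "ennreal b = ennreal (b - \<phi> y) + ennreal (\<phi> y)" by (subst ennreal_plus[symmetric]) auto
        then show ?thesis using True by (simp add: distrib_right)
      next
        case False then show ?thesis by simp
      qed
    qed
    also have "\<dots> = AV + PV" unfolding AV_def PV_def by (rule nn_integral_add) auto
    finally show ?thesis .
  qed
  have Fsplit: "F = G + ennreal (d * (1 - \<sigma>)) * P"
  proof -
    have "F = (\<integral>\<^sup>+y. ennreal (indicator {x..0} y * (f (\<phi> y) - d * (1 - \<sigma>) * \<phi> y)) + ennreal (d * (1 - \<sigma>)) * ennreal (indicator {x..0} y * \<phi> y) \<partial>lborel)"
      unfolding F_def
    proof (rule nn_integral_cong)
      fix y
      show "ennreal (indicator {x..0} y * f (\<phi> y)) = ennreal (indicator {x..0} y * (f (\<phi> y) - d * (1 - \<sigma>) * \<phi> y)) + ennreal (d * (1 - \<sigma>)) * ennreal (indicator {x..0} y * \<phi> y)"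
      proof (cases "y \<in> {x..0}")
        case True
        then have h: "\<phi> y \<le> b" "0 \<le> \<phi> y" using pleb pnn by auto
        then have "d * (1 - \<sigma>) * \<phi> y \<le> f (\<phi> y)" using fg by auto
        moreover have "0 \<le> d * (1 - \<sigma>) * \<phi> y" using h d sig1 by auto
        ultimately have "ennreal (f (\<phi> y)) = ennreal (f (\<phi> y) - d * (1 - \<sigma>) * \<phi> y) + ennreal (d * (1 - \<sigma>) * \<phi> y)"
          by (subst ennreal_plus[symmetric]) auto
        then show ?thesis using True h d sig1 by (simp add: ennreal_mult)
      next
        case False then show ?thesis by simp
      qed
    qed
    also have "\<dots> = G + ennreal (d * (1 - \<sigma>)) * P"
      unfolding G_def P_def by (subst nn_integral_add) (auto simp: nn_integral_cmult)
    finally show ?thesis .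
  qed
  have PUle: "PU \<le> ennreal (c / \<mu>)"
  proof -
    have "PU \<le> (\<integral>\<^sup>+y. ennreal (\<phi>0 y) * U' y \<partial>lborel)"
      unfolding PU_def
    proof (rule nn_integral_mono)
      fix y
      have "ennreal (indicator {x..0} y * \<phi> y) \<le> ennreal (\<phi>0 y)"
        using x by (auto simp: \<phi>0_def indicator_def)
      moreover have "U y \<le> U' y"
        unfolding U_def U'_def
      proof (rule nn_integral_mono)
        fix z
        have "K (z - y) = K (y - z)" using Keven[of "y - z"] by simp
        then show "ennreal (indicator {0<..} z * K (z - y)) \<le> ennreal (indicator {0..} z * K (y - z))"
          using Knn by (auto simp: indicator_def)
      qed
      ultimately show "ennreal (indicator {x..0} y * \<phi> y) * U y \<le> ennreal (\<phi>0 y) * U' y"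
        by (rule mult_mono) auto
    qed
    also have "\<dots> = ennreal (c / \<mu>)"
      unfolding speed[symmetric]
    proof (rule nn_integral_cong)
      fix y
      have "(\<integral>\<^sup>+z. ennreal (indicator {..0} y * indicator {0..} z * K (y - z) * \<phi> y) \<partial>lborel)
          = (\<integral>\<^sup>+z. ennreal (\<phi>0 y) * ennreal (indicator {0..} z * K (y - z)) \<partial>lborel)"
        by (rule nn_integral_cong) (subst ennreal_mult'[symmetric], simp add: p0nn, simp add: \<phi>0_def mult_ac)
      also have "\<dots> = ennreal (\<phi>0 y) * U' y" unfolding U'_def by (rule nn_integral_cmult) auto
      finally show "ennreal (\<phi>0 y) * U' y = (\<integral>\<^sup>+z. ennreal (indicator {..0} y * indicator {0..} z * K (y - z) * \<phi> y) \<partial>lborel)" by simp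
    qed
    finally show ?thesis .
  qed

  have Pfin: "P < \<infinity>"
  proof -
    have "P \<le> (\<integral>\<^sup>+y. ennreal b * indicator {x..0} y \<partial>lborel)"
      unfolding P_def by (rule nn_integral_mono) (auto simp: indicator_def pleb ennreal_leI)
    also have "\<dots> = ennreal b * ennreal (0 - x)" using x by (subst nn_integral_cmult_indicator) auto
    finally show ?thesis by (simp add: le_less_trans ennreal_mult_less_top)
  qed
  have sPfin: "ennreal \<sigma> * P < \<infinity>" using Pfin by (simp add: ennreal_mult_less_top)
  have "PW \<le> ennreal \<sigma> * P" "PV \<le> ennreal \<sigma> * P"
    unfolding part2[symmetric] by (simp_all add: add.assoc add_increasing2)
  then have PWfin: "PW < \<infinity>" and PVfin: "PV < \<infinity>" using sPfin by (meson le_less_trans)+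
  define Z where "Z = ennreal d * PV + ennreal d * PW + ennreal (d * (1 - \<sigma>)) * P"
  have Zfin: "Z \<noteq> \<infinity>" unfolding Z_def using PWfin PVfin Pfin
    by (simp add: ennreal_mult_eq_top_iff less_top)
  have e1: "ennreal d * AV + G + Z = ennreal d * (ennreal b * VV + PW) + F"
    unfolding Z_def AVsplit Fsplit by (simp add: distrib_left add_ac)
  have e2: "ennreal d * P = ennreal d * (PW + PV + PU) + ennreal (d * (1 - \<sigma>)) * P"
  proof -
    have "ennreal d = ennreal (d * \<sigma>) + ennreal (d * (1 - \<sigma>))"
      using d sig0 sig1 by (subst ennreal_plus[symmetric]) (auto simp: algebra_simps)
    then have "ennreal d * P = ennreal (d * \<sigma>) * P + ennreal (d * (1 - \<sigma>)) * P" by (simp add: distrib_right)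
    also have "ennreal (d * \<sigma>) * P = ennreal d * (ennreal \<sigma> * P)" using d sig0 by (simp add: ennreal_mult mult.assoc)
    finally show ?thesis by (simp add: part2)
  qed
  have "ennreal d * AV + G + Z \<le> ennreal d * Q + F"
    unfolding e1 using Qlow by (intro add_mono mult_left_mono) auto
  also have "\<dots> = ennreal d * P + ennreal (c * b)" by (rule odeI')
  also have "\<dots> = Z + ennreal d * PU + ennreal (c * b)"
    unfolding e2 Z_def by (simp add: distrib_left add_ac)
  also have "\<dots> \<le> Z + ennreal d * ennreal (c / \<mu>) + ennreal (c * b)"
    using PUle by (intro add_mono mult_left_mono) auto
  finally have "Z + (ennreal d * AV + G) \<le> Z + (ennreal (c * b) + ennreal d * ennreal (c / \<mu>))"
    by (simp add: add_ac)
  then have "ennreal d * AV + G \<le> ennreal (c * b) + ennreal d * ennreal (c / \<mu>)"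
    using Zfin ennreal_add_left_cancel_le by blast
  then show ?thesis unfolding AV_def V_def G_def .
qed



lemma GL:
  fixes K :: "real \<Rightarrow> real" and A B :: "real set"
  assumes [measurable]: "K \<in> borel_measurable borel" "A \<in> sets borel" "B \<in> sets borel"
  shows "(\<integral>\<^sup>+y. \<integral>\<^sup>+z. ennreal (indicator A y * indicator B z * K (z - y)) \<partial>lborel \<partial>lborel)
       = (\<integral>\<^sup>+u. ennreal (K u) * emeasure lborel {y. y \<in> A \<and> y + u \<in> B} \<partial>lborel)"
proof -
  have inner: "(\<integral>\<^sup>+z. ennreal (indicator A y * indicator B z * K (z - y)) \<partial>lborel)
      = (\<integral>\<^sup>+u. ennreal (indicator A y * indicator B (y + u) * K u) \<partial>lborel)" for y
    by (subst nn_integral_real_affine[where c=1 and t=y]) auto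
  have "(\<integral>\<^sup>+y. \<integral>\<^sup>+z. ennreal (indicator A y * indicator B z * K (z - y)) \<partial>lborel \<partial>lborel)
     = (\<integral>\<^sup>+y. \<integral>\<^sup>+u. ennreal (indicator A y * indicator B (y + u) * K u) \<partial>lborel \<partial>lborel)"
    by (simp add: inner)
  also have "\<dots> = (\<integral>\<^sup>+u. \<integral>\<^sup>+y. ennreal (indicator A y * indicator B (y + u) * K u) \<partial>lborel \<partial>lborel)"
    by (rule lborel_pair.Fubini') measurable
  also have "\<dots> = (\<integral>\<^sup>+u. ennreal (K u) * emeasure lborel {y. y \<in> A \<and> y + u \<in> B} \<partial>lborel)"
  proof (rule nn_integral_cong)
    fix u
    have "(\<integral>\<^sup>+y. ennreal (indicator A y * indicator B (y + u) * K u) \<partial>lborel)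
        = (\<integral>\<^sup>+y. ennreal (K u) * indicator {y. y \<in> A \<and> y + u \<in> B} y \<partial>lborel)"
      by (rule nn_integral_cong) (auto simp: indicator_def)
    also have "\<dots> = ennreal (K u) * emeasure lborel {y. y \<in> A \<and> y + u \<in> B}"
      by (rule nn_integral_cmult_indicator) measurable
    finally show "(\<integral>\<^sup>+y. ennreal (indicator A y * indicator B (y + u) * K u) \<partial>lborel) = ennreal (K u) * emeasure lborel {y. y \<in> A \<and> y + u \<in> B}" .
  qed
  finally show ?thesis .
qed

lemma GL2:
  fixes K :: "real \<Rightarrow> real" and A B :: "real set"
  assumes [measurable]: "K \<in> borel_measurable borel" "A \<in> sets borel" "B \<in> sets borel"
  shows "(\<integral>\<^sup>+y. \<integral>\<^sup>+z. ennreal (indicator A y * indicator B z * K (y - z)) \<partial>lborel \<partial>lborel)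
       = (\<integral>\<^sup>+u. ennreal (K u) * emeasure lborel {y. y \<in> A \<and> y - u \<in> B} \<partial>lborel)"
proof -
  have inner: "(\<integral>\<^sup>+z. ennreal (indicator A y * indicator B z * K (y - z)) \<partial>lborel)
      = (\<integral>\<^sup>+u. ennreal (indicator A y * indicator B (y - u) * K u) \<partial>lborel)" for y
    by (subst nn_integral_real_affine[where c="-1" and t=y]) auto
  have "(\<integral>\<^sup>+y. \<integral>\<^sup>+z. ennreal (indicator A y * indicator B z * K (y - z)) \<partial>lborel \<partial>lborel)
     = (\<integral>\<^sup>+y. \<integral>\<^sup>+u. ennreal (indicator A y * indicator B (y - u) * K u) \<partial>lborel \<partial>lborel)"
    by (simp add: inner)
  also have "\<dots> = (\<integral>\<^sup>+u. \<integral>\<^sup>+y. ennreal (indicator A y * indicator B (y - u) * K u) \<partial>lborel \<partial>lborel)"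
    by (rule lborel_pair.Fubini') measurable
  also have "\<dots> = (\<integral>\<^sup>+u. ennreal (K u) * emeasure lborel {y. y \<in> A \<and> y - u \<in> B} \<partial>lborel)"
  proof (rule nn_integral_cong)
    fix u
    have "(\<integral>\<^sup>+y. ennreal (indicator A y * indicator B (y - u) * K u) \<partial>lborel)
        = (\<integral>\<^sup>+y. ennreal (K u) * indicator {y. y \<in> A \<and> y - u \<in> B} y \<partial>lborel)"
      by (rule nn_integral_cong) (auto simp: indicator_def)
    also have "\<dots> = ennreal (K u) * emeasure lborel {y. y \<in> A \<and> y - u \<in> B}"
      by (rule nn_integral_cmult_indicator) measurable
    finally show "(\<integral>\<^sup>+y. ennreal (indicator A y * indicator B (y - u) * K u) \<partial>lborel) = ennreal (K u) * emeasure lborel {y. y \<in> A \<and> y - u \<in> B}" .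
  qed
  finally show ?thesis .
qed

lemma meas_bound:
  fixes xa ell u :: real
  assumes xa: "xa < 0" and l: "0 \<le> ell"
  shows "ennreal (max 0 (- u - ell)) \<le> emeasure lborel {y. y \<in> {xa + ell..0} \<and> y + u \<in> {..<xa}}
           + emeasure lborel {y. y \<in> {..<xa} \<and> y - u \<in> {0..}}"
proof (cases "- u - ell \<le> 0")
  case True then show ?thesis by simp
next
  case False
  show ?thesis
  proof (cases "- u \<le> - xa")
    case True
    have "{xa + ell..<xa - u} \<subseteq> {y. y \<in> {xa + ell..0} \<and> y + u \<in> {..<xa}}" using True by auto
    then have "emeasure lborel {xa + ell..<xa - u} \<le> emeasure lborel {y. y \<in> {xa + ell..0} \<and> y + u \<in> {..<xa}}"
      by (rule emeasure_mono) measurable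
    then have "ennreal (max 0 (- u - ell)) \<le> emeasure lborel {y. y \<in> {xa + ell..0} \<and> y + u \<in> {..<xa}}"
      using False by simp
    then show ?thesis by (simp add: add_increasing2)
  next
    case F2: False
    have s2: "{u..<xa} \<subseteq> {y. y \<in> {..<xa} \<and> y - u \<in> {0..}}" by auto
    then have m2: "emeasure lborel {u..<xa} \<le> emeasure lborel {y. y \<in> {..<xa} \<and> y - u \<in> {0..}}"
      by (rule emeasure_mono) measurable
    show ?thesis
    proof (cases "ell \<le> - xa")
      case True
      have "{xa + ell..<0} \<subseteq> {y. y \<in> {xa + ell..0} \<and> y + u \<in> {..<xa}}" using F2 by auto
      then have m1: "emeasure lborel {xa + ell..<0} \<le> emeasure lborel {y. y \<in> {xa + ell..0} \<and> y + u \<in> {..<xa}}"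
        by (rule emeasure_mono) measurable
      have "ennreal (max 0 (- u - ell)) = ennreal (0 - (xa + ell)) + ennreal (xa - u)"
        using False F2 True by (subst ennreal_plus[symmetric]) auto
      also have "\<dots> \<le> emeasure lborel {y. y \<in> {xa + ell..0} \<and> y + u \<in> {..<xa}} + emeasure lborel {y. y \<in> {..<xa} \<and> y - u \<in> {0..}}"
        using m1 m2 True F2 by (intro add_mono) auto
      finally show ?thesis .
    next
      case False
      have "ennreal (max 0 (- u - ell)) \<le> ennreal (xa - u)" using False F2 by (intro ennreal_leI) auto
      also have "\<dots> \<le> emeasure lborel {y. y \<in> {..<xa} \<and> y - u \<in> {0..}}" using m2 F2 by simp
      finally show ?thesis by (simp add: add_increasing)
    qed
  qed
qed



lemma GLa:
  fixes K :: "real \<Rightarrow> real" and A B :: "real set"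
  assumes [measurable]: "K \<in> borel_measurable borel" "A \<in> sets borel" "B \<in> sets borel"
  shows "(\<integral>\<^sup>+y. \<integral>\<^sup>+z. ennreal (indicator A y * indicator B z * K (z - y)) \<partial>lborel \<partial>lborel)
       = (\<integral>\<^sup>+u. \<integral>\<^sup>+y. ennreal (indicator A y * indicator B (y + u) * K u) \<partial>lborel \<partial>lborel)"
proof -
  have inner: "(\<integral>\<^sup>+z. ennreal (indicator A y * indicator B z * K (z - y)) \<partial>lborel)
      = (\<integral>\<^sup>+u. ennreal (indicator A y * indicator B (y + u) * K u) \<partial>lborel)" for y
    by (subst nn_integral_real_affine[where c=1 and t=y]) auto
  have "(\<integral>\<^sup>+y. \<integral>\<^sup>+z. ennreal (indicator A y * indicator B z * K (z - y)) \<partial>lborel \<partial>lborel)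
     = (\<integral>\<^sup>+y. \<integral>\<^sup>+u. ennreal (indicator A y * indicator B (y + u) * K u) \<partial>lborel \<partial>lborel)"
    by (simp add: inner)
  also have "\<dots> = (\<integral>\<^sup>+u. \<integral>\<^sup>+y. ennreal (indicator A y * indicator B (y + u) * K u) \<partial>lborel \<partial>lborel)"
    by (rule lborel_pair.Fubini') measurable
  finally show ?thesis .
qed

lemma GL2a:
  fixes K :: "real \<Rightarrow> real" and A B :: "real set"
  assumes [measurable]: "K \<in> borel_measurable borel" "A \<in> sets borel" "B \<in> sets borel"
  shows "(\<integral>\<^sup>+y. \<integral>\<^sup>+z. ennreal (indicator A y * indicator B z * K (y - z)) \<partial>lborel \<partial>lborel)
       = (\<integral>\<^sup>+u. \<integral>\<^sup>+y. ennreal (indicator A y * indicator B (y - u) * K u) \<partial>lborel \<partial>lborel)"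
proof -
  have inner: "(\<integral>\<^sup>+z. ennreal (indicator A y * indicator B z * K (y - z)) \<partial>lborel)
      = (\<integral>\<^sup>+u. ennreal (indicator A y * indicator B (y - u) * K u) \<partial>lborel)" for y
    by (subst nn_integral_real_affine[where c="-1" and t=y]) auto
  have "(\<integral>\<^sup>+y. \<integral>\<^sup>+z. ennreal (indicator A y * indicator B z * K (y - z)) \<partial>lborel \<partial>lborel)
     = (\<integral>\<^sup>+y. \<integral>\<^sup>+u. ennreal (indicator A y * indicator B (y - u) * K u) \<partial>lborel \<partial>lborel)"
    by (simp add: inner)
  also have "\<dots> = (\<integral>\<^sup>+u. \<integral>\<^sup>+y. ennreal (indicator A y * indicator B (y - u) * K u) \<partial>lborel \<partial>lborel)"
    by (rule lborel_pair.Fubini') measurable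
  finally show ?thesis .
qed

lemma inner_meas:
  fixes A B :: "real set" and k u :: real and g :: "real \<Rightarrow> real"
  assumes [measurable]: "A \<in> sets borel" "B \<in> sets borel" "g \<in> borel_measurable borel"
  shows "(\<integral>\<^sup>+y. ennreal (indicator A y * indicator B (g y) * k) \<partial>lborel) = ennreal k * emeasure lborel {y. y \<in> A \<and> g y \<in> B}"
proof -
  have "(\<integral>\<^sup>+y. ennreal (indicator A y * indicator B (g y) * k) \<partial>lborel)
      = (\<integral>\<^sup>+y. ennreal k * indicator {y. y \<in> A \<and> g y \<in> B} y \<partial>lborel)"
    by (rule nn_integral_cong) (auto simp: indicator_def)
  also have "\<dots> = ennreal k * emeasure lborel {y. y \<in> A \<and> g y \<in> B}"
    by (rule nn_integral_cmult_indicator) measurable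
  finally show ?thesis .
qed

lemma G_lower:
  fixes x p q kap :: real and h :: "real \<Rightarrow> real"
  assumes "x \<le> p" "p \<le> q" "q \<le> 0" "0 \<le> kap" and hk: "\<And>y. p \<le> y \<Longrightarrow> y \<le> q \<Longrightarrow> kap \<le> h y"
  shows "ennreal (kap * (q - p)) \<le> (\<integral>\<^sup>+y. ennreal (indicator {x..0} y * h y) \<partial>lborel)"
proof -
  have "ennreal (kap * (q - p)) = (\<integral>\<^sup>+y. ennreal kap * indicator {p..q} y \<partial>lborel)"
    using assms by (subst nn_integral_cmult_indicator) (auto simp: ennreal_mult)
  also have "\<dots> \<le> (\<integral>\<^sup>+y. ennreal (indicator {x..0} y * h y) \<partial>lborel)"
    using assms by (intro nn_integral_mono) (auto simp: indicator_def intro!: ennreal_leI hk)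
  finally show ?thesis .
qed

lemma main_n:
  fixes d \<mu> c M \<sigma> \<eta> ell :: real and K f \<phi> :: "real \<Rightarrow> real"
  assumes d: "d > 0" and mu: "\<mu> > 0" and c: "c > 0"
    and Km[measurable]: "K \<in> borel_measurable borel" and Knn: "\<And>t. K t \<ge> 0"
    and Keven: "\<And>t. K (- t) = K t" and Kint: "integrable lborel K"
    and sig: "ennreal \<sigma> = (\<integral>\<^sup>+t. ennreal (K t) \<partial>lborel)" and sig0: "0 \<le> \<sigma>" and sig1: "\<sigma> \<le> 1"
    and fcont: "continuous_on {0..} f"
    and fratio: "\<And>u v. 0 < u \<Longrightarrow> u \<le> v \<Longrightarrow> f v / v \<le> f u / u"
    and fpos: "f (1/2) > 0" and f0: "f 0 = 0"
    and small: "d * (1 - \<sigma>) \<le> f (1/2)"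
    and sw: "semiwave d \<mu> K f \<eta> c \<phi>"
    and M: "M > 0"
    and ell: "ell = M * (1/2 + d / \<mu>) / (f (1/2) / 4)"
    and Th: "ennreal (M * (2 / d + 8 / \<mu>)) \<le> (\<integral>\<^sup>+u. ennreal (K u) * ennreal (max 0 (- u - ell)) \<partial>lborel)"
  shows "M \<le> c"
proof -
  from sw obtain \<phi>' where
    deriv: "\<And>z. z \<le> 0 \<Longrightarrow> (\<phi> has_real_derivative \<phi>' z) (at z within {..0})"
    and pc': "continuous_on {..0} \<phi>'"
    and ode: "\<And>z. z < 0 \<Longrightarrow> d * (LINT y:{..0}|lborel. K (z - y) * \<phi> y) - d * \<phi> z + c * \<phi>' z + f (\<phi> z) = 0"
    and strict: "\<And>y z. y < z \<Longrightarrow> z \<le> 0 \<Longrightarrow> \<phi> z < \<phi> y"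
    and lim: "(\<phi> \<longlongrightarrow> \<eta>) at_bot" and phi0: "\<phi> 0 = 0"
    and speed: "(\<integral>\<^sup>+x. \<integral>\<^sup>+y. ennreal (indicator {..0} x * indicator {0..} y * K (x - y) * \<phi> x) \<partial>lborel \<partial>lborel) = ennreal (c / \<mu>)"
    unfolding semiwave_def by blast
  have pc: "continuous_on {..0} \<phi>"
    by (rule DERIV_continuous_on) (use deriv in auto)
  have mono: "\<phi> z \<le> \<phi> y" if "y \<le> z" "z \<le> 0" for y z
    using strict[of y z] that by (cases "y = z") auto
  have pnn: "0 \<le> \<phi> y" if "y \<le> 0" for y using mono[of y 0] that phi0 by simp
  have pbd: "\<phi> y \<le> \<eta>" if "y \<le> 0" for y
  proof (rule tendsto_lowerbound[OF lim])
    show "\<forall>\<^sub>F t in at_bot. \<phi> y \<le> \<phi> t"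
      unfolding eventually_at_bot_linorder using mono that by (intro exI[of _ y]) auto
  qed simp
  define k0 where "k0 = f (1/2)"
  have k0: "k0 > 0" using fpos by (simp add: k0_def)
  have flow: "2 * (k0 * u) \<le> f u" if "0 \<le> u" "u \<le> 1/2" for u
  proof (cases "u = 0")
    case True then show ?thesis using f0 by simp
  next
    case False
    then have "f (1/2) / (1/2) \<le> f u / u" using fratio[of u "1/2"] that by simp
    then show ?thesis using False that by (simp add: k0_def field_simps)
  qed
  have fg: "0 \<le> f u \<and> d * (1 - \<sigma>) * u \<le> f u" if "0 \<le> u" "u \<le> 1/2" for u
  proof -
    have "d * (1 - \<sigma>) * u \<le> k0 * u" using small that by (intro mult_right_mono) (auto simp: k0_def)
    moreover have "0 \<le> k0 * u" using k0 that by simp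
    ultimately show ?thesis using flow[OF that] by linarith
  qed
  have glow: "k0 * u \<le> f u - d * (1 - \<sigma>) * u" if "0 \<le> u" "u \<le> 1/2" for u
  proof -
    have "d * (1 - \<sigma>) * u \<le> k0 * u" using small that by (intro mult_right_mono) (auto simp: k0_def)
    then show ?thesis using flow[OF that] by simp
  qed
  have coreapp: "ennreal d * (\<integral>\<^sup>+y. ennreal (indicator {x..0} y * (\<phi> x - \<phi> y)) * (\<integral>\<^sup>+z. ennreal (indicator {..<x} z * K (z - y)) \<partial>lborel) \<partial>lborel)
        + (\<integral>\<^sup>+y. ennreal (indicator {x..0} y * (f (\<phi> y) - d * (1 - \<sigma>) * \<phi> y)) \<partial>lborel)
       \<le> ennreal (c * \<phi> x) + ennreal d * ennreal (c / \<mu>)" if x: "x < 0" and xb: "\<phi> x \<le> 1/2" for x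
  proof (rule core[OF d mu _ Km Knn Keven Kint sig sig0 sig1 pc pc' deriv pnn pbd mono ode phi0 speed fcont x refl])
    show "0 \<le> c" using c by simp
    show "0 \<le> f u \<and> d * (1 - \<sigma>) * u \<le> f u" if "0 \<le> u" "u \<le> \<phi> x" for u
      using fg[of u] that xb by auto
  qed (use c x in auto)

  have cpos: "0 < c * (1/2 + d / \<mu>)" using c d mu by (simp add: add_pos_pos)
  have Rle: "ennreal (c * b) + ennreal d * ennreal (c / \<mu>) \<le> ennreal (c * (1/2 + d / \<mu>))" if "b \<le> 1/2" for b
  proof -
    have "ennreal (c * b) \<le> ennreal (c * (1/2))" using that c by (intro ennreal_leI) simp
    moreover have "ennreal d * ennreal (c / \<mu>) = ennreal (d * (c / \<mu>))"
      using d c mu by (intro ennreal_mult[symmetric]) auto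
    ultimately have "ennreal (c * b) + ennreal d * ennreal (c / \<mu>) \<le> ennreal (c * (1/2)) + ennreal (d * (c / \<mu>))"
      by (simp add: add_right_mono)
    also have "\<dots> = ennreal (c * (1/2 + d / \<mu>))"
      using c d mu by (subst ennreal_plus[symmetric]) (auto simp: algebra_simps)
    finally show ?thesis .
  qed
  have ex: "\<exists>x0\<le>0. 1/2 \<le> \<phi> x0"
  proof (rule ccontr)
    assume "\<not> ?thesis"
    then have lt: "\<phi> y < 1/2" if "y \<le> 0" for y using that by force
    define p where "p = \<phi> (-1)"
    have p: "0 < p" unfolding p_def using strict[of "-1" 0] phi0 by simp
    define x where "x = -1 - (c * (1/2 + d / \<mu>) + 1) / (k0 * p)"
    have fr: "0 < (c * (1/2 + d / \<mu>) + 1) / (k0 * p)" using cpos k0 p by simp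
    then have x1: "x < -1" unfolding x_def by simp
    have eq: "k0 * p * (-1 - x) = c * (1/2 + d / \<mu>) + 1" unfolding x_def using k0 p by simp
    have "ennreal (k0 * p * (-1 - x)) \<le> (\<integral>\<^sup>+y. ennreal (indicator {x..0} y * (f (\<phi> y) - d * (1 - \<sigma>) * \<phi> y)) \<partial>lborel)"
    proof (rule G_lower)
      show "x \<le> x" "x \<le> -1" "-1 \<le> (0::real)" using x1 by auto
      show "0 \<le> k0 * p" using k0 p by simp
      fix y assume y: "x \<le> y" "y \<le> -1"
      have "p \<le> \<phi> y" unfolding p_def using mono[of y "-1"] y by simp
      moreover have "\<phi> y \<le> 1/2" using lt[of y] y by simp
      ultimately have "k0 * p \<le> k0 * \<phi> y" using k0 by simp
      also have "\<dots> \<le> f (\<phi> y) - d * (1 - \<sigma>) * \<phi> y" using glow[of "\<phi> y"] pnn[of y] lt[of y] y by simp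
      finally show "k0 * p \<le> f (\<phi> y) - d * (1 - \<sigma>) * \<phi> y" .
    qed
    also have "\<dots> \<le> ennreal d * (\<integral>\<^sup>+y. ennreal (indicator {x..0} y * (\<phi> x - \<phi> y)) * (\<integral>\<^sup>+z. ennreal (indicator {..<x} z * K (z - y)) \<partial>lborel) \<partial>lborel)
        + (\<integral>\<^sup>+y. ennreal (indicator {x..0} y * (f (\<phi> y) - d * (1 - \<sigma>) * \<phi> y)) \<partial>lborel)"
      by (simp add: add_increasing)
    also have "\<dots> \<le> ennreal (c * \<phi> x) + ennreal d * ennreal (c / \<mu>)"
      using x1 lt[of x] by (intro coreapp) auto
    also have "\<dots> \<le> ennreal (c * (1/2 + d / \<mu>))" using lt[of x] x1 by (intro Rle) auto
    finally have "c * (1/2 + d / \<mu>) + 1 \<le> c * (1/2 + d / \<mu>)"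
      unfolding eq using cpos by (subst (asm) ennreal_le_iff) auto
    then show False by simp
  qed
  then obtain x0 where x0: "x0 \<le> 0" "1/2 \<le> \<phi> x0" by blast
  have "\<exists>xa. x0 \<le> xa \<and> xa \<le> 0 \<and> \<phi> xa = 1/2"
    by (rule IVT2') (use x0 phi0 in \<open>auto intro: continuous_on_subset[OF pc]\<close>)
  then obtain xa where xa: "x0 \<le> xa" "xa \<le> 0" "\<phi> xa = 1/2" by blast
  have xa0: "xa < 0" using xa phi0 by (cases "xa = 0") auto

  show ?thesis
  proof (rule ccontr)
    assume "\<not> M \<le> c"
    then have cM: "c < M" by simp
    define R where "R = ennreal (c * (1/2 + d / \<mu>))"
    define AV where "AV = (\<integral>\<^sup>+y. ennreal (indicator {xa..0} y * (1/2 - \<phi> y)) * (\<integral>\<^sup>+z. ennreal (indicator {..<xa} z * K (z - y)) \<partial>lborel) \<partial>lborel)"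
    define G where "G = (\<integral>\<^sup>+y. ennreal (indicator {xa..0} y * (f (\<phi> y) - d * (1 - \<sigma>) * \<phi> y)) \<partial>lborel)"
    have cr: "ennreal d * AV + G \<le> R"
      unfolding AV_def G_def R_def using order.trans[OF coreapp[OF xa0, unfolded xa(3), OF order.refl] Rle[of "1/2"]] by simp
    have ell0: "0 \<le> ell" unfolding ell using M d mu k0 by (simp add: k0_def)
    have len: "\<phi> y0 \<le> 1/4" if y0: "xa + ell \<le> y0" "y0 \<le> 0" for y0
    proof (rule ccontr)
      assume "\<not> \<phi> y0 \<le> 1/4"
      then have gt: "1/4 < \<phi> y0" by simp
      have "ennreal (k0 / 4 * (y0 - xa)) \<le> G"
        unfolding G_def
      proof (rule G_lower)
        show "xa \<le> xa" "xa \<le> y0" "y0 \<le> 0" "0 \<le> k0 / 4" using y0 ell0 k0 by auto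
        fix y assume y: "xa \<le> y" "y \<le> y0"
        have "\<phi> y0 \<le> \<phi> y" using mono[of y y0] y y0 by simp
        moreover have "\<phi> y \<le> 1/2" using mono[of xa y] y y0 xa by simp
        ultimately have "k0 / 4 \<le> k0 * \<phi> y" using gt k0 by (simp add: field_simps)
        also have "\<dots> \<le> f (\<phi> y) - d * (1 - \<sigma>) * \<phi> y"
          using glow[of "\<phi> y"] \<open>\<phi> y \<le> 1/2\<close> gt \<open>\<phi> y0 \<le> \<phi> y\<close> by simp
        finally show "k0 / 4 \<le> f (\<phi> y) - d * (1 - \<sigma>) * \<phi> y" .
      qed
      also have "\<dots> \<le> R" by (rule order.trans[OF _ cr]) (intro add_increasing, auto)
      finally have "k0 / 4 * (y0 - xa) \<le> c * (1/2 + d / \<mu>)"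
        unfolding R_def using cpos by (subst (asm) ennreal_le_iff) auto
      moreover have "k0 / 4 * ell \<le> k0 / 4 * (y0 - xa)" using y0 k0 by (intro mult_left_mono) auto
      moreover have "k0 / 4 * ell = M * (1/2 + d / \<mu>)" unfolding ell k0_def using fpos by simp
      moreover have "c * (1/2 + d / \<mu>) < M * (1/2 + d / \<mu>)" using cM cpos c
        by (intro mult_strict_right_mono) (auto simp: add_pos_pos d mu)
      ultimately show False by linarith
    qed

    define V where "V y = (\<integral>\<^sup>+z. ennreal (indicator {..<xa} z * K (z - y)) \<partial>lborel)" for y
    have [measurable]: "V \<in> borel_measurable borel" unfolding V_def[abs_def] by measurable
    define VV2 where "VV2 = (\<integral>\<^sup>+y. \<integral>\<^sup>+z. ennreal (indicator {xa + ell..0} y * indicator {..<xa} z * K (z - y)) \<partial>lborel \<partial>lborel)"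
    define UU2 where "UU2 = (\<integral>\<^sup>+y. \<integral>\<^sup>+z. ennreal (indicator {..<xa} y * indicator {0..} z * K (y - z)) \<partial>lborel \<partial>lborel)"
    have VV2eq: "VV2 = (\<integral>\<^sup>+y. ennreal (indicator {xa + ell..0} y) * V y \<partial>lborel)"
      unfolding VV2_def V_def
    proof (rule nn_integral_cong)
      fix y
      have "(\<integral>\<^sup>+z. ennreal (indicator {xa + ell..0} y * indicator {..<xa} z * K (z - y)) \<partial>lborel)
          = (\<integral>\<^sup>+z. ennreal (indicator {xa + ell..0} y) * ennreal (indicator {..<xa} z * K (z - y)) \<partial>lborel)"
        by (rule nn_integral_cong) (simp add: ennreal_mult' mult.assoc)
      also have "\<dots> = ennreal (indicator {xa + ell..0} y) * (\<integral>\<^sup>+z. ennreal (indicator {..<xa} z * K (z - y)) \<partial>lborel)"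
        by (rule nn_integral_cmult) measurable
      finally show "(\<integral>\<^sup>+z. ennreal (indicator {xa + ell..0} y * indicator {..<xa} z * K (z - y)) \<partial>lborel)
          = ennreal (indicator {xa + ell..0} y) * (\<integral>\<^sup>+z. ennreal (indicator {..<xa} z * K (z - y)) \<partial>lborel)" .
    qed
    have b1: "ennreal (1/4) * VV2 \<le> AV"
    proof -
      have "ennreal (1/4) * VV2 = (\<integral>\<^sup>+y. ennreal (1/4) * (ennreal (indicator {xa + ell..0} y) * V y) \<partial>lborel)"
        unfolding VV2eq by (rule nn_integral_cmult[symmetric]) measurable
      also have "\<dots> \<le> AV"
        unfolding AV_def V_def[symmetric]
      proof (rule nn_integral_mono)
        fix y
        show "ennreal (1/4) * (ennreal (indicator {xa + ell..0} y) * V y) \<le> ennreal (indicator {xa..0} y * (1/2 - \<phi> y)) * V y"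
        proof (cases "y \<in> {xa + ell..0}")
          case True
          then have "\<phi> y \<le> 1/4" using len by auto
          moreover have "y \<in> {xa..0}" using True ell0 by auto
          ultimately have "ennreal (1/4) \<le> ennreal (indicator {xa..0} y * (1/2 - \<phi> y))"
            by (intro ennreal_leI) auto
          then show ?thesis using True by (simp add: mult_right_mono)
        next
          case False then show ?thesis by simp
        qed
      qed
      finally show ?thesis .
    qed
    have c1: "ennreal (1/2) * UU2 \<le> ennreal (c / \<mu>)"
    proof -
      have "ennreal (1/2) * UU2 = (\<integral>\<^sup>+y. ennreal (1/2) * (\<integral>\<^sup>+z. ennreal (indicator {..<xa} y * indicator {0..} z * K (y - z)) \<partial>lborel) \<partial>lborel)"
        unfolding UU2_def by (rule nn_integral_cmult[symmetric]) measurable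
      also have "\<dots> = (\<integral>\<^sup>+y. \<integral>\<^sup>+z. ennreal (1/2) * ennreal (indicator {..<xa} y * indicator {0..} z * K (y - z)) \<partial>lborel \<partial>lborel)"
        by (intro nn_integral_cong nn_integral_cmult[symmetric]) measurable
      also have "\<dots> \<le> (\<integral>\<^sup>+y. \<integral>\<^sup>+z. ennreal (indicator {..0} y * indicator {0..} z * K (y - z) * \<phi> y) \<partial>lborel \<partial>lborel)"
      proof (intro nn_integral_mono)
        fix y z
        have "1/2 * (indicator {..<xa} y * indicator {0..} z * K (y - z)) \<le> indicator {..0} y * indicator {0..} z * K (y - z) * \<phi> y"
        proof (cases "y < xa")
          case True
          then have "1/2 \<le> \<phi> y" using mono[of y xa] xa by simp
          then have "1/2 * K (y - z) \<le> \<phi> y * K (y - z)" using Knn[of "y - z"] by (intro mult_right_mono) auto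
          then show ?thesis using True xa by (auto simp: indicator_def mult.commute)
        next
          case False then show ?thesis using Knn[of "y - z"] pnn[of y] by (auto simp: indicator_def)
        qed
        then show "ennreal (1/2) * ennreal (indicator {..<xa} y * indicator {0..} z * K (y - z)) \<le> ennreal (indicator {..0} y * indicator {0..} z * K (y - z) * \<phi> y)"
          by (subst ennreal_mult[symmetric]) (auto intro!: ennreal_leI simp: Knn)
      qed
      also have "\<dots> = ennreal (c / \<mu>)" by (rule speed)
      finally show ?thesis .
    qed
    have d1: "(\<integral>\<^sup>+u. ennreal (K u) * ennreal (max 0 (- u - ell)) \<partial>lborel) \<le> VV2 + UU2"
    proof -
      have "VV2 + UU2 = (\<integral>\<^sup>+u. \<integral>\<^sup>+y. ennreal (indicator {xa + ell..0} y * indicator {..<xa} (y + u) * K u) \<partial>lborel \<partial>lborel)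
          + (\<integral>\<^sup>+u. \<integral>\<^sup>+y. ennreal (indicator {..<xa} y * indicator {0..} (y - u) * K u) \<partial>lborel \<partial>lborel)"
        unfolding VV2_def UU2_def by (simp add: GLa GL2a)
      also have "\<dots> = (\<integral>\<^sup>+u. (\<integral>\<^sup>+y. ennreal (indicator {xa + ell..0} y * indicator {..<xa} (y + u) * K u) \<partial>lborel)
          + (\<integral>\<^sup>+y. ennreal (indicator {..<xa} y * indicator {0..} (y - u) * K u) \<partial>lborel) \<partial>lborel)"
        by (rule nn_integral_add[symmetric]) measurable
      also have "\<dots> = (\<integral>\<^sup>+u. ennreal (K u) * emeasure lborel {y. y \<in> {xa + ell..0} \<and> y + u \<in> {..<xa}}
          + ennreal (K u) * emeasure lborel {y. y \<in> {..<xa} \<and> y - u \<in> {0..}} \<partial>lborel)"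
        by (intro nn_integral_cong) (simp add: inner_meas[where g="\<lambda>y. y + _", simplified] inner_meas[where g="\<lambda>y. y - _", simplified])
      finally have eqs: "VV2 + UU2 = \<dots>" .
      show ?thesis unfolding eqs
      proof (intro nn_integral_mono)
        fix u
        have "ennreal (K u) * ennreal (max 0 (- u - ell)) \<le> ennreal (K u) * (emeasure lborel {y. y \<in> {xa + ell..0} \<and> y + u \<in> {..<xa}}
          + emeasure lborel {y. y \<in> {..<xa} \<and> y - u \<in> {0..}})"
          by (rule mult_left_mono[OF meas_bound[OF xa0 ell0]]) simp
        then show "ennreal (K u) * ennreal (max 0 (- u - ell)) \<le> ennreal (K u) * emeasure lborel {y. y \<in> {xa + ell..0} \<and> y + u \<in> {..<xa}}
          + ennreal (K u) * emeasure lborel {y. y \<in> {..<xa} \<and> y - u \<in> {0..}}"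
          by (simp only: distrib_left)
      qed
    qed

    have AVR: "ennreal d * AV \<le> R" by (rule order.trans[OF _ cr]) (intro add_increasing2, auto)
    have s1: "ennreal d * (ennreal (1/4) * VV2) \<le> R"
      by (rule order.trans[OF mult_left_mono[OF b1] AVR]) simp
    have s2: "ennreal d * (ennreal (1/4) * UU2) \<le> ennreal d * ennreal (c / (2 * \<mu>))"
    proof (rule mult_left_mono)
      have "ennreal (1/4) * UU2 = ennreal (1/2) * (ennreal (1/2) * UU2)"
      proof -
        have q: "ennreal (1/4) = ennreal (1/2) * ennreal (1/2)" by (subst ennreal_mult[symmetric]) auto
        show ?thesis unfolding q by (simp only: mult.assoc)
      qed
      also have "\<dots> \<le> ennreal (1/2) * ennreal (c / \<mu>)" by (rule mult_left_mono[OF c1]) simp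
      also have "\<dots> = ennreal (1/2 * (c / \<mu>))" using c mu by (subst ennreal_mult[symmetric]) auto
      also have "\<dots> = ennreal (c / (2 * \<mu>))" by simp
      finally show "ennreal (1/4) * UU2 \<le> ennreal (c / (2 * \<mu>))" .
    qed simp
    have "ennreal (d * (1/4) * (M * (2 / d + 8 / \<mu>))) = ennreal d * ennreal (1/4) * ennreal (M * (2 / d + 8 / \<mu>))"
    proof -
      have X0: "0 \<le> M * (2 / d + 8 / \<mu>)" using d M mu by simp
      have "ennreal d * ennreal (1/4) = ennreal (d * (1/4))" using d by (intro ennreal_mult[symmetric]) auto
      moreover have "ennreal (d * (1/4)) * ennreal (M * (2 / d + 8 / \<mu>)) = ennreal (d * (1/4) * (M * (2 / d + 8 / \<mu>)))"
        using d X0 by (intro ennreal_mult[symmetric]) auto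
      ultimately show ?thesis by simp
    qed
    also have "\<dots> \<le> ennreal d * ennreal (1/4) * (VV2 + UU2)"
      using order.trans[OF Th d1] by (intro mult_left_mono) auto
    also have "\<dots> = ennreal d * (ennreal (1/4) * VV2) + ennreal d * (ennreal (1/4) * UU2)"
      by (simp add: distrib_left mult.assoc)
    also have "\<dots> \<le> R + ennreal d * ennreal (c / (2 * \<mu>))" using s1 s2 by (rule add_mono)
    also have "\<dots> = ennreal (c * (1/2 + d / \<mu>) + d * (c / (2 * \<mu>)))"
      unfolding R_def using c d mu by (simp add: ennreal_mult[symmetric] ennreal_plus[symmetric] add_pos_pos del: ennreal_plus)
    finally have ineq: "d * (1/4) * (M * (2 / d + 8 / \<mu>)) \<le> c * (1/2 + d / \<mu>) + d * (c / (2 * \<mu>))"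
      using c d mu by (subst (asm) ennreal_le_iff) (auto intro!: add_nonneg_nonneg)
    have l: "d * (1/4) * (M * (2 / d + 8 / \<mu>)) = M / 2 + 2 * (M * (d / \<mu>))" using d mu by (simp add: field_simps)
    have r: "c * (1/2 + d / \<mu>) + d * (c / (2 * \<mu>)) = c / 2 + 3 / 2 * (c * (d / \<mu>))" using d mu by (simp add: field_simps)
    have "c * (d / \<mu>) < M * (d / \<mu>)" using cM d mu by (intro mult_strict_right_mono) auto
    moreover have "0 < c * (d / \<mu>)" using c d mu by simp
    ultimately show False using ineq l r cM by linarith
  qed
qed

lemma theta_ev:
  fixes J :: "real \<Rightarrow> real" and Jn :: "nat \<Rightarrow> real \<Rightarrow> real" and ell B :: real
  assumes Jm[measurable]: "J \<in> borel_measurable borel"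
    and Jnm[measurable]: "\<And>n. Jn n \<in> borel_measurable borel"
    and Jint: "integrable lborel J" and J1: "integral\<^sup>L lborel J = 1" and Jnn: "\<And>x. J x \<ge> 0"
    and Jnint: "\<And>n. integrable lborel (Jn n)" and Jnnn: "\<And>n x. Jn n x \<ge> 0"
    and mono: "\<And>n x. Jn n x \<le> Jn (Suc n) x \<and> Jn (Suc n) x \<le> J x"
    and L1: "(\<lambda>n. LINT x|lborel. \<bar>Jn n x - J x\<bar>) \<longlonglongrightarrow> 0"
    and hyp: "(\<integral>\<^sup>+ x. \<integral>\<^sup>+ y. ennreal (indicator {..0} x * indicator {0..} y * J (x - y)) \<partial>lborel \<partial>lborel) = \<infinity>"
    and ell: "0 \<le> ell"
  shows "eventually (\<lambda>n. ennreal B \<le> (\<integral>\<^sup>+u. ennreal (Jn n u) * ennreal (max 0 (- u - ell)) \<partial>lborel)) sequentially"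
proof -
  define w where "w u = ennreal (max 0 (- u - ell))" for u
  have [measurable]: "w \<in> borel_measurable borel" unfolding w_def[abs_def] by measurable
  have JnJ: "Jn n x \<le> J x" for n x using mono[of n x] by simp
  have inc: "incseq (\<lambda>n. Jn n x)" for x by (rule incseq_SucI) (use mono in auto)
  have J1': "(\<integral>\<^sup>+u. ennreal (J u) \<partial>lborel) = 1"
    using nn_integral_eq_integral[OF Jint] Jnn J1 by simp
  have ThJ: "(\<integral>\<^sup>+u. ennreal (J u) * w u \<partial>lborel) = \<infinity>"
  proof -
    have "\<infinity> = (\<integral>\<^sup>+u. ennreal (J u) * emeasure lborel {y. y \<in> {..0} \<and> y - u \<in> {0..}} \<partial>lborel)"
      using hyp GL2[OF Jm, of "{..0}" "{0..}"] by simp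
    also have "\<dots> \<le> (\<integral>\<^sup>+u. ennreal (J u) * w u + ennreal (J u) * ennreal ell \<partial>lborel)"
    proof (rule nn_integral_mono)
      fix u :: real
      have "emeasure lborel {y. y \<in> {..0} \<and> y - u \<in> {0..}} \<le> emeasure lborel {u..0}"
      proof (rule emeasure_mono)
        show "{y. y \<in> {..0} \<and> y - u \<in> {0..}} \<subseteq> {u..0}" by (auto simp: algebra_simps)
      qed simp
      also have "\<dots> \<le> w u + ennreal ell"
      proof -
        have e: "w u + ennreal ell = ennreal (max 0 (- u - ell) + ell)" unfolding w_def using ell by (intro ennreal_plus[symmetric]) auto
        show ?thesis unfolding e emeasure_lborel_Icc_eq using ell by (intro ennreal_leI) auto
      qed
      finally show "ennreal (J u) * emeasure lborel {y. y \<in> {..0} \<and> y - u \<in> {0..}} \<le> ennreal (J u) * w u + ennreal (J u) * ennreal ell"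
        by (simp add: distrib_left[symmetric] mult_left_mono)
    qed
    also have "\<dots> = (\<integral>\<^sup>+u. ennreal (J u) * w u \<partial>lborel) + ennreal ell"
      by (subst nn_integral_add) (auto simp: nn_integral_multc J1')
    finally have "\<infinity> \<le> (\<integral>\<^sup>+u. ennreal (J u) * w u \<partial>lborel) + ennreal ell" .
    then show ?thesis by (auto simp: top_unique)
  qed
  define g where "g u = (SUP n. ennreal (Jn n u))" for u
  have [measurable]: "g \<in> borel_measurable borel" unfolding g_def[abs_def] by measurable
  have gle: "g u \<le> ennreal (J u)" for u unfolding g_def by (rule SUP_least) (auto intro: ennreal_leI JnJ)
  have ge: "ennreal (Jn n u) \<le> g u" for n u unfolding g_def by (rule SUP_upper) auto
  define X where "X = (\<integral>\<^sup>+u. ennreal (J u) - g u \<partial>lborel)"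
  have Xle: "X \<le> ennreal (LINT x|lborel. \<bar>Jn n x - J x\<bar>)" for n
  proof -
    have "X \<le> (\<integral>\<^sup>+u. ennreal \<bar>Jn n u - J u\<bar> \<partial>lborel)"
      unfolding X_def
    proof (rule nn_integral_mono)
      fix u :: real
      have "ennreal (J u) - g u \<le> ennreal (J u) - ennreal (Jn n u)" by (rule ennreal_minus_mono) (auto simp: ge)
      also have "\<dots> = ennreal (J u - Jn n u)" using Jnnn by (simp add: ennreal_minus)
      also have "\<dots> \<le> ennreal \<bar>Jn n u - J u\<bar>" by (intro ennreal_leI) auto
      finally show "ennreal (J u) - g u \<le> ennreal \<bar>Jn n u - J u\<bar>" .
    qed
    also have "\<dots> = ennreal (LINT x|lborel. \<bar>Jn n x - J x\<bar>)"
      by (rule nn_integral_eq_integral) (auto intro!: integrable_abs Bochner_Integration.integrable_diff Jnint Jint)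
    finally show ?thesis .
  qed
  have "X \<le> 0"
  proof (rule tendsto_lowerbound)
    show "(\<lambda>n. ennreal (LINT x|lborel. \<bar>Jn n x - J x\<bar>)) \<longlonglongrightarrow> 0"
      using tendsto_ennrealI[OF L1] by simp
    show "\<forall>\<^sub>F n in sequentially. X \<le> ennreal (LINT x|lborel. \<bar>Jn n x - J x\<bar>)" using Xle by simp
  qed simp
  then have "X = 0" by simp
  then have "AE u in lborel. ennreal (J u) - g u = 0" unfolding X_def by (subst (asm) nn_integral_0_iff_AE) auto
  then have AEg: "AE u in lborel. g u = ennreal (J u)"
    by eventually_elim (use gle in \<open>auto simp: diff_eq_0_iff_ennreal intro: antisym\<close>)
  have "(\<integral>\<^sup>+u. ennreal (J u) * w u \<partial>lborel) = (\<integral>\<^sup>+u. g u * w u \<partial>lborel)"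
    by (rule nn_integral_cong_AE) (use AEg in eventually_elim, auto)
  also have "\<dots> = (\<integral>\<^sup>+u. (SUP n. ennreal (Jn n u) * w u) \<partial>lborel)"
    unfolding g_def by (simp add: SUP_mult_right_ennreal)
  also have "\<dots> = (SUP n. (\<integral>\<^sup>+u. ennreal (Jn n u) * w u \<partial>lborel))"
  proof (rule nn_integral_monotone_convergence_SUP)
    show "incseq (\<lambda>n u. ennreal (Jn n u) * w u)"
      by (rule incseq_SucI) (auto simp: le_fun_def intro!: mult_right_mono ennreal_leI mono[THEN conjunct1])
  qed measurable
  finally have "(SUP n. (\<integral>\<^sup>+u. ennreal (Jn n u) * w u \<partial>lborel)) = \<infinity>" using ThJ by simp
  then have "ennreal B < (SUP n. (\<integral>\<^sup>+u. ennreal (Jn n u) * w u \<partial>lborel))" by (simp only:) simp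
  then obtain n0 where n0: "ennreal B < (\<integral>\<^sup>+u. ennreal (Jn n0 u) * w u \<partial>lborel)" by (auto simp only: less_SUP_iff)
  have "ennreal B \<le> (\<integral>\<^sup>+u. ennreal (Jn n u) * w u \<partial>lborel)" if "n0 \<le> n" for n
  proof -
    have "(\<integral>\<^sup>+u. ennreal (Jn n0 u) * w u \<partial>lborel) \<le> (\<integral>\<^sup>+u. ennreal (Jn n u) * w u \<partial>lborel)"
      by (intro nn_integral_mono mult_right_mono ennreal_leI) (use inc that in \<open>auto simp: incseq_def\<close>)
    then show ?thesis using n0 by simp
  qed
  then show ?thesis unfolding w_def eventually_sequentially by blast
qed

theorem lemma4p3:
  fixes d \<mu> :: real and J f :: "real \<Rightarrow> real"
    and Jn :: "nat \<Rightarrow> real \<Rightarrow> real" and c :: "nat \<Rightarrow> real"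
  assumes "d > 0" and "\<mu> > 0"
    and "kernel_J J"
    and "(\<integral>\<^sup>+ x. \<integral>\<^sup>+ y. ennreal (indicator {..0} x * indicator {0..} y * J (x - y)) \<partial>lborel \<partial>lborel) = \<infinity>"
    and "cond_f3 f"
    and "\<And>n. continuous_on UNIV (Jn n)"
    and "\<And>n x. Jn n x \<ge> 0"
    and "\<And>n x. Jn n (-x) = Jn n x"
    and "\<And>n. compact (closure {x. Jn n x \<noteq> 0}) \<and> closure {x. Jn n x \<noteq> 0} \<noteq> {}"
    and "\<And>n x. Jn n x \<le> Jn (Suc n) x \<and> Jn (Suc n) x \<le> J x"
    and "(\<lambda>n. LINT x|lborel. \<bar>Jn n x - J x\<bar>) \<longlonglongrightarrow> 0"
    and "eventually (\<lambda>n. c n > 0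
           \<and> (\<exists>\<phi>. semiwave d \<mu> (Jn n) f (eta f (LINT x|lborel. Jn n x)) (c n) \<phi>)
           \<and> (\<forall>c'. c' > 0 \<and> (\<exists>\<phi>. semiwave d \<mu> (Jn n) f (eta f (LINT x|lborel. Jn n x)) c' \<phi>)
                   \<longrightarrow> c' = c n)) sequentially"
  shows "filterlim c at_top sequentially"
proof -
  have d: "d > 0" and mu: "\<mu> > 0" using assms(1,2) .
  from assms(3) have Jc: "continuous_on UNIV J" and Jnn: "\<And>x. J x \<ge> 0" and Jint: "integrable lborel J"
    and J1: "integral\<^sup>L lborel J = 1"
    unfolding kernel_J_def by auto
  have Jm[measurable]: "J \<in> borel_measurable borel" by (rule borel_measurable_continuous_onI[OF Jc])
  have Jnm[measurable]: "Jn n \<in> borel_measurable borel" for n by (rule borel_measurable_continuous_onI[OF assms(6)])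
  have Jnint: "integrable lborel (Jn n)" for n
  proof -
    let ?S = "closure {x. Jn n x \<noteq> 0}"
    have "integrable lborel (\<lambda>x. indicator ?S x *\<^sub>R Jn n x)"
      using assms(9)[of n] by (intro borel_integrable_compact continuous_on_subset[OF assms(6)]) auto
    moreover have "(\<lambda>x. indicator ?S x *\<^sub>R Jn n x) = Jn n"
    proof
      fix x show "indicator ?S x *\<^sub>R Jn n x = Jn n x"
        using closure_subset[of "{x. Jn n x \<noteq> 0}"] by (cases "x \<in> ?S") auto
    qed
    ultimately show ?thesis by simp
  qed
  define \<sigma> where "\<sigma> n = (LINT x|lborel. Jn n x)" for n
  have sig: "ennreal (\<sigma> n) = (\<integral>\<^sup>+t. ennreal (Jn n t) \<partial>lborel)" for n
    unfolding \<sigma>_def by (rule nn_integral_eq_integral[symmetric]) (auto intro: Jnint assms(7))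
  have sig0: "0 \<le> \<sigma> n" for n unfolding \<sigma>_def by (rule Bochner_Integration.integral_nonneg) (auto intro: assms(7))
  have sig1: "\<sigma> n \<le> 1" for n
  proof -
    have "\<sigma> n \<le> integral\<^sup>L lborel J" unfolding \<sigma>_def
      by (rule integral_mono[OF Jnint Jint]) (use assms(10) in \<open>meson order.trans\<close>)
    then show ?thesis using J1 by simp
  qed
  have "(\<lambda>n. \<sigma> n - 1) \<longlonglongrightarrow> 0"
  proof (rule Lim_null_comparison[OF _ assms(11)])
    show "\<forall>\<^sub>F n in sequentially. norm (\<sigma> n - 1) \<le> (LINT x|lborel. \<bar>Jn n x - J x\<bar>)"
    proof (intro always_eventually allI)
      fix n
      have "\<sigma> n - 1 = integral\<^sup>L lborel (\<lambda>x. Jn n x - J x)"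
        unfolding \<sigma>_def using J1 Jnint Jint by simp
      also have "norm \<dots> \<le> (LINT x|lborel. norm (Jn n x - J x))" by (rule integral_norm_bound)
      finally show "norm (\<sigma> n - 1) \<le> (LINT x|lborel. \<bar>Jn n x - J x\<bar>)" by simp
    qed
  qed
  then have "(\<lambda>n. d * (- (\<sigma> n - 1))) \<longlonglongrightarrow> d * (- 0)"
    by (intro tendsto_intros)
  then have t0: "(\<lambda>n. d * (1 - \<sigma> n)) \<longlonglongrightarrow> 0" by simp
  from assms(5) obtain f' where fder: "\<And>u. u \<ge> 0 \<Longrightarrow> (f has_real_derivative f' u) (at u within {0..})"
    and f0: "f 0 = 0" and fpos01: "\<And>u. 0 < u \<Longrightarrow> u < 1 \<Longrightarrow> f u > 0"
    and fratio: "\<And>u v. 0 < u \<Longrightarrow> u \<le> v \<Longrightarrow> f v / v \<le> f u / u"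
    unfolding cond_f3_def by blast
  have fcont: "continuous_on {0..} f" by (rule DERIV_continuous_on) (use fder in auto)
  have fpos: "f (1/2) > 0" using fpos01 by simp
  have evsmall: "eventually (\<lambda>n. d * (1 - \<sigma> n) \<le> f (1/2)) sequentially"
    using order_tendstoD(2)[OF t0 fpos] by eventually_elim simp
  show ?thesis
    unfolding filterlim_at_top
  proof
    fix Z :: real
    define M where "M = max Z 1"
    have M: "M > 0" "Z \<le> M" unfolding M_def by auto
    define ell where "ell = M * (1/2 + d / \<mu>) / (f (1/2) / 4)"
    have ell0: "0 \<le> ell" unfolding ell_def using M d mu fpos by simp
    have evT: "eventually (\<lambda>n. ennreal (M * (2 / d + 8 / \<mu>)) \<le> (\<integral>\<^sup>+u. ennreal (Jn n u) * ennreal (max 0 (- u - ell)) \<partial>lborel)) sequentially"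
      by (rule theta_ev[OF Jm Jnm Jint J1 Jnn Jnint assms(7) assms(10) assms(11) assms(4) ell0])
    show "eventually (\<lambda>n. Z \<le> c n) sequentially"
      using assms(12) evsmall evT
    proof eventually_elim
      case (elim n)
      then obtain \<phi> where sw: "semiwave d \<mu> (Jn n) f (eta f (LINT x|lborel. Jn n x)) (c n) \<phi>" and cn: "c n > 0" by blast
      have "M \<le> c n"
      proof (rule main_n[OF d mu cn Jnm assms(7) assms(8) Jnint sig sig0 sig1 fcont fratio fpos f0 _ sw M(1) ell_def])
        show "d * (1 - \<sigma> n) \<le> f (1/2)" using elim by simp
        show "ennreal (M * (2 / d + 8 / \<mu>)) \<le> (\<integral>\<^sup>+u. ennreal (Jn n u) * ennreal (max 0 (- u - ell)) \<partial>lborel)"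
          using elim by simp
      qed
      then show ?case using M by simp
    qed
  qed
qed


end
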